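(* Let $TS=(S,\Sigma_b\cup\Sigma_r,S_0,R,\le)$ be a process given by a finite set $\Delta$ of labelled rules, and let $P'_0,P'_1,\dots,P'_w$ be the sequence of rule sets defined below. If a configuration $s\in S$ is reachable in $TS(P'_i)$ for some $i\in\{0,\dots,w\}$ (i.e. there is $s_0\in S_0$ with $s_0\xrightarrow{*}s$ in $TS(P'_i)$), then $s$ is reachable in the reconfigurable broadcast network $RBN(TS)$, i.e. there exist an initial configuration $\theta_0\in\Theta_0$, a configuration $\theta$ with $\theta_0\xrightarrow{*}\theta$ in $RBN(TS)$, and a vertex $v$ of $\theta$ with $L_\theta(v)=s$.
   Context: Fix a finite alphabet $\Sigma$; let $\Sigma_b=\{!!a:a\in\Sigma\}$ (broadcast labels) and $\Sigma_r=\{??a:a\in\Sigma\}$ (receive labels). A labelled well-structured transition system (labelled WSTS) is a tuple $(S,\Lambda,S_0,R,\le)$ with $S$ a set of configurations, $\Lambda$ a finite alphabet, $S_0\subseteq S$ the initial configurations, $R\subseteq S\times\Lambda\times S$, and $\le$ a well-quasi-order on $S$ compatible with $R$: if $s_1\le t_1$ and $(s_1,a,s_2)\in R$ then there is $t_2$ with $(t_1,a,t_2)\in R$ and $s_2\le t_2$. A process is a labelled WSTS with $\Lambda=\Sigma_b\cup\Sigma_r$. The process is assumed to be given by a finite description: a finite set $\Delta$ of rules, each rule $t$ carrying a label in $\Sigma_b\cup\Sigma_r$ and inducing a set of transitions of $R$ with that label ($s\xrightarrow{t}s'$ means rule $t$ is enabled at $s$ and produces $s'$), such that $R$ is the union of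 the transitions induced by the rules. For $\Delta'\subseteq\Delta$, $TS(\Delta')$ denotes the system with the same $S,S_0,\le$ but only the transitions induced by rules in $\Delta'$; it is assumed to be again a labelled WSTS. For a rule $t$, $c_t$ denotes the finite set of $\le$-minimal configurations at which $t$ is enabled. For $a\in\Sigma$, $B_a$ is the set of rules labelled $!!a$, $R_a$ the set of rules labelled $??a$, and $Rec=\bigcup_a R_a$. A configuration $c$ is coverable in a system if some reachable configuration $c'$ satisfies $c'\ge c$. Sequence $P'_i$: $P'_0=\Delta\setminus Rec$. For $i\ge1$, let $AddT_i$ be the union of the sets $R_a$ over all letters $a$ not yet handled in an earlier round such that some $t\in B_a$ has some element of $c_t$ coverable in $TS(P'_{i-1})$ (handled letters are then removed from further consideration), and $P'_i=P'_{i-1}\cup AddT_i$; $w$ is the first index with $AddT_{w+1}=\emptyset$, so $P'_w$ is the final rule set. An $S$-graph is a finite undirected graph $(V,E,L)$ without self-loops with labelling $L:V\to S$. $\Theta$ is the set of all finite $S$-graphs, $\Theta_0$ the set of all finite $S_0$-graphs (all labels in $S_0$, arbitrary topology). Broadcast step: $(V,E,L)\xrightarrow{a}(V,E,L')$ if there is $v\in V$ with $(L(v),!!a,L'(v))\in R$, $(L(u),??a,L'(u))\in R$ for every neighbour $u$ of $v$, and $L'(w)=L(w)$ for all other $w$. Reconfiguration step: $(V,E,L)\to(V,E',L)$ for any set $E'$ of edges on $V$ without self-loops. $RBN(TS)$ is the transition system on $\Theta$ with initial set $\Theta_0$ and both kinds of steps. *)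

theory Defs
  imports Main
begin

datatype 'a lbl = Bcast 'a | Recv 'a

text \<open>A process: the set of configurations S is the whole type 's.
  Each rule t has a label and induces the transitions p_step t s s'.\<close>
record ('s, 'a, 'r) process =
  p_Sig   :: "'a set"
  p_Rules :: "'r set"
  p_lab   :: "'r \<Rightarrow> 'a lbl"
  p_step  :: "'r \<Rightarrow> 's \<Rightarrow> 's \<Rightarrow> bool"
  p_init  :: "'s set"
  p_le    :: "'s \<Rightarrow> 's \<Rightarrow> bool"

definition lts :: "('s,'a,'r) process \<Rightarrow> 'r set \<Rightarrow> 's \<Rightarrow> 'a lbl \<Rightarrow> 's \<Rightarrow> bool" where
  "lts TS D s l s' \<longleftrightarrow> (\<exists>t\<in>D. p_lab TS t = l \<and> p_step TS t s s')"

abbreviation R_rel :: "('s,'a,'r) process \<Rightarrow> 's \<Rightarrow> 'a lbl \<Rightarrow> 's \<Rightarrow> bool" where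
  "R_rel TS \<equiv> lts TS (p_Rules TS)"

definition wqo_on_type :: "('s \<Rightarrow> 's \<Rightarrow> bool) \<Rightarrow> bool" where
  "wqo_on_type le \<longleftrightarrow> reflp le \<and> transp le \<and>
     (\<forall>f :: nat \<Rightarrow> 's. \<exists>i j. i < j \<and> le (f i) (f j))"

definition compatible :: "('s,'a,'r) process \<Rightarrow> 'r set \<Rightarrow> bool" where
  "compatible TS D \<longleftrightarrow> (\<forall>s1 t1 l s2. p_le TS s1 t1 \<and> lts TS D s1 l s2 \<longrightarrow>
      (\<exists>t2. lts TS D t1 l t2 \<and> p_le TS s2 t2))"

definition enabled :: "('s,'a,'r) process \<Rightarrow> 'r \<Rightarrow> 's \<Rightarrow> bool" where
  "enabled TS t s \<longleftrightarrow> (\<exists>s'. p_step TS t s s')"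

definition cmin :: "('s,'a,'r) process \<Rightarrow> 'r \<Rightarrow> 's set" where
  "cmin TS t = {c. enabled TS t c \<and> (\<forall>c'. enabled TS t c' \<and> p_le TS c' c \<longrightarrow> p_le TS c c')}"

definition is_process :: "('s,'a,'r) process \<Rightarrow> bool" where
  "is_process TS \<longleftrightarrow>
     finite (p_Sig TS) \<and> finite (p_Rules TS) \<and>
     (\<forall>t\<in>p_Rules TS. p_lab TS t \<in> Bcast ` p_Sig TS \<union> Recv ` p_Sig TS) \<and>
     wqo_on_type (p_le TS) \<and>
     (\<forall>D. D \<subseteq> p_Rules TS \<longrightarrow> compatible TS D) \<and>
     (\<forall>t\<in>p_Rules TS. finite (cmin TS t))"

definition ts_step :: "('s,'a,'r) process \<Rightarrow> 'r set \<Rightarrow> 's \<Rightarrow> 's \<Rightarrow> bool" where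
  "ts_step TS D s s' \<longleftrightarrow> (\<exists>t\<in>D. p_step TS t s s')"

definition ts_reach :: "('s,'a,'r) process \<Rightarrow> 'r set \<Rightarrow> 's \<Rightarrow> 's \<Rightarrow> bool" where
  "ts_reach TS D = (ts_step TS D)\<^sup>*\<^sup>*"

definition coverable :: "('s,'a,'r) process \<Rightarrow> 'r set \<Rightarrow> 's \<Rightarrow> bool" where
  "coverable TS D c \<longleftrightarrow> (\<exists>s0\<in>p_init TS. \<exists>s'. ts_reach TS D s0 s' \<and> p_le TS c s')"

definition Bset :: "('s,'a,'r) process \<Rightarrow> 'a \<Rightarrow> 'r set" where
  "Bset TS a = {t\<in>p_Rules TS. p_lab TS t = Bcast a}"

definition Rset :: "('s,'a,'r) process \<Rightarrow> 'a \<Rightarrow> 'r set" where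
  "Rset TS a = {t\<in>p_Rules TS. p_lab TS t = Recv a}"

definition Rec :: "('s,'a,'r) process \<Rightarrow> 'r set" where
  "Rec TS = (\<Union>a\<in>p_Sig TS. Rset TS a)"

definition new_letters :: "('s,'a,'r) process \<Rightarrow> 'r set \<Rightarrow> 'a set \<Rightarrow> 'a set" where
  "new_letters TS P H = {a\<in>p_Sig TS. a \<notin> H \<and>
      (\<exists>t\<in>Bset TS a. \<exists>c\<in>cmin TS t. coverable TS P c)}"

text \<open>pseq TS i = (P'_i, letters handled in rounds 1..i).\<close>
fun pseq :: "('s,'a,'r) process \<Rightarrow> nat \<Rightarrow> 'r set \<times> 'a set" where
  "pseq TS 0 = (p_Rules TS - Rec TS, {})"
| "pseq TS (Suc i) = (let P = fst (pseq TS i); H = snd (pseq TS i);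
                          N = new_letters TS P H
                      in (P \<union> (\<Union>a\<in>N. Rset TS a), H \<union> N))"

definition Pseq :: "('s,'a,'r) process \<Rightarrow> nat \<Rightarrow> 'r set" where
  "Pseq TS i = fst (pseq TS i)"

definition AddT_Suc :: "('s,'a,'r) process \<Rightarrow> nat \<Rightarrow> 'r set" where
  "AddT_Suc TS i = (\<Union>a\<in>new_letters TS (fst (pseq TS i)) (snd (pseq TS i)). Rset TS a)"

definition final_index :: "('s,'a,'r) process \<Rightarrow> nat" where
  "final_index TS = (LEAST w. AddT_Suc TS w = {})"

text \<open>S-graphs: finite vertex set (vertices are naturals), undirected edges as
  two-element sets, labelling L (only relevant on the vertex set).\<close>
record 's sgraph =
  Vs  :: "nat set"
  Es  :: "nat set set"
  Lab :: "nat \<Rightarrow> 's"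

definition valid_edges :: "nat set \<Rightarrow> nat set set \<Rightarrow> bool" where
  "valid_edges V E \<longleftrightarrow> E \<subseteq> {{u, v} | u v. u \<in> V \<and> v \<in> V \<and> u \<noteq> v}"

definition sgraph_wf :: "'s sgraph \<Rightarrow> bool" where
  "sgraph_wf g \<longleftrightarrow> finite (Vs g) \<and> valid_edges (Vs g) (Es g)"

definition Theta0 :: "('s,'a,'r) process \<Rightarrow> 's sgraph set" where
  "Theta0 TS = {g. sgraph_wf g \<and> (\<forall>v\<in>Vs g. Lab g v \<in> p_init TS)}"

definition neighbour :: "'s sgraph \<Rightarrow> nat \<Rightarrow> nat \<Rightarrow> bool" where
  "neighbour g v u \<longleftrightarrow> {u, v} \<in> Es g \<and> u \<noteq> v"

definition bcast_step :: "('s,'a,'r) process \<Rightarrow> 'a \<Rightarrow> 's sgraph \<Rightarrow> 's sgraph \<Rightarrow> bool" where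
  "bcast_step TS a g g' \<longleftrightarrow> Vs g' = Vs g \<and> Es g' = Es g \<and>
     (\<exists>v\<in>Vs g. R_rel TS (Lab g v) (Bcast a) (Lab g' v) \<and>
        (\<forall>u. neighbour g v u \<longrightarrow> R_rel TS (Lab g u) (Recv a) (Lab g' u)) \<and>
        (\<forall>w. w \<noteq> v \<and> \<not> neighbour g v w \<longrightarrow> Lab g' w = Lab g w))"

definition reconf_step :: "'s sgraph \<Rightarrow> 's sgraph \<Rightarrow> bool" where
  "reconf_step g g' \<longleftrightarrow> Vs g' = Vs g \<and> Lab g' = Lab g \<and> valid_edges (Vs g) (Es g')"

definition rbn_step :: "('s,'a,'r) process \<Rightarrow> 's sgraph \<Rightarrow> 's sgraph \<Rightarrow> bool" where
  "rbn_step TS g g' \<longleftrightarrow> (\<exists>a. bcast_step TS a g g') \<or> reconf_step g g'"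

definition rbn_reach :: "('s,'a,'r) process \<Rightarrow> 's sgraph \<Rightarrow> 's sgraph \<Rightarrow> bool" where
  "rbn_reach TS = (rbn_step TS)\<^sup>*\<^sup>*"

end

theory Submission
  imports Defs
begin

definition ext :: "'s sgraph \<Rightarrow> nat set \<Rightarrow> (nat \<Rightarrow> 's) \<Rightarrow> 's sgraph" where
  "ext g W M = g\<lparr>Vs := Vs g \<union> W, Lab := (\<lambda>x. if x \<in> Vs g then Lab g x else M x)\<rparr>"

lemma step_inv:
  assumes "rbn_step TS g h" "sgraph_wf g"
  shows "sgraph_wf h \<and> Vs h = Vs g"
  using assms unfolding rbn_step_def bcast_step_def reconf_step_def sgraph_wf_def by auto

lemma reach_inv:
  assumes "rbn_reach TS g h" "sgraph_wf g"
  shows "sgraph_wf h \<and> Vs h = Vs g"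
  using assms unfolding rbn_reach_def
  by (induction rule: rtranclp_induct) (auto dest: step_inv)

lemma valid_edges_mono: "valid_edges V E \<Longrightarrow> V \<subseteq> V' \<Longrightarrow> valid_edges V' E"
  unfolding valid_edges_def by blast

lemma neighbour_in: "sgraph_wf g \<Longrightarrow> neighbour g v u \<Longrightarrow> u \<in> Vs g"
  unfolding sgraph_wf_def valid_edges_def neighbour_def
  by (auto simp: doubleton_eq_iff)

lemma step_lift:
  assumes "rbn_step TS g h" "sgraph_wf g" "W \<inter> Vs g = {}"
  shows "rbn_step TS (ext g W M) (ext h W M)"
  using assms(1) unfolding rbn_step_def
proof
  assume "\<exists>a. bcast_step TS a g h"
  then obtain a where b: "bcast_step TS a g h" by blast
  then obtain v where v: "v \<in> Vs g" "R_rel TS (Lab g v) (Bcast a) (Lab h v)"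
    "\<forall>u. neighbour g v u \<longrightarrow> R_rel TS (Lab g u) (Recv a) (Lab h u)"
    "\<forall>w. w \<noteq> v \<and> \<not> neighbour g v w \<longrightarrow> Lab h w = Lab g w"
    and eq: "Vs h = Vs g" "Es h = Es g"
    unfolding bcast_step_def by blast
  have nb: "neighbour (ext g W M) v u = neighbour g v u" for u
    unfolding neighbour_def ext_def by simp
  have "bcast_step TS a (ext g W M) (ext h W M)"
    unfolding bcast_step_def
  proof (intro conjI bexI[of _ v] allI impI)
    show "R_rel TS (Lab (ext g W M) v) (Bcast a) (Lab (ext h W M) v)"
      using v eq by (auto simp: ext_def)
    show "R_rel TS (Lab (ext g W M) u) (Recv a) (Lab (ext h W M) u)"
      if "neighbour (ext g W M) v u" for u
    proof -
      have n: "neighbour g v u" using that nb by simp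
      then have "u \<in> Vs g" using neighbour_in[OF assms(2) n] by blast
      then show ?thesis using n v eq by (simp add: ext_def)
    qed
    show "Lab (ext h W M) w = Lab (ext g W M) w"
      if "w \<noteq> v \<and> \<not> neighbour (ext g W M) v w" for w
    proof -
      have "w \<noteq> v \<and> \<not> neighbour g v w" using that nb by simp
      then show ?thesis using v eq by (simp add: ext_def)
    qed
  qed (use eq v in \<open>auto simp: ext_def\<close>)
  then show "(\<exists>a. bcast_step TS a (ext g W M) (ext h W M)) \<or> reconf_step (ext g W M) (ext h W M)"
    by blast
next
  assume "reconf_step g h"
  then have "reconf_step (ext g W M) (ext h W M)"
    unfolding reconf_step_def ext_def using valid_edges_mono by fastforce
  then show "(\<exists>a. bcast_step TS a (ext g W M) (ext h W M)) \<or> reconf_step (ext g W M) (ext h W M)"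
    by blast
qed

lemma reach_lift:
  assumes "rbn_reach TS g h" "sgraph_wf g" "W \<inter> Vs g = {}"
  shows "rbn_reach TS (ext g W M) (ext h W M)"
  using assms(1) unfolding rbn_reach_def
proof (induction rule: rtranclp_induct)
  case (step y z)
  have "sgraph_wf y \<and> Vs y = Vs g" using reach_inv[of TS g y] step(1) assms(2)
    unfolding rbn_reach_def by blast
  then have "rbn_step TS (ext y W M) (ext z W M)"
    using step_lift[OF step(2)] assms(3) by auto
  then show ?case using step(3) by (meson rtranclp.rtrancl_into_rtrancl)
qed simp

lemma union_reach:
  assumes g0: "g0 \<in> Theta0 TS" "Es g0 = {}" "rbn_reach TS g0 g" "Es g = {}"
    and h0: "h0 \<in> Theta0 TS" "Es h0 = {}" "rbn_reach TS h0 h" "Es h = {}"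
    and disj: "Vs g0 \<inter> Vs h0 = {}"
    and U: "U = (\<lambda>x. if x \<in> Vs g0 then Lab g x else Lab h0 x)"
  shows "ext g0 (Vs h0) U \<in> Theta0 TS \<and> Es (ext g0 (Vs h0) U) = {}
    \<and> rbn_reach TS (ext g0 (Vs h0) U) (ext h (Vs g0) U)
    \<and> Es (ext h (Vs g0) U) = {}
    \<and> Vs (ext g0 (Vs h0) U) = Vs g0 \<union> Vs h0
    \<and> (\<forall>x\<in>Vs g0. Lab (ext h (Vs g0) U) x = Lab g x)
    \<and> (\<forall>x\<in>Vs h0. Lab (ext h (Vs g0) U) x = Lab h x)"
proof -
  have wg: "sgraph_wf g0" and wh: "sgraph_wf h0" using g0 h0 by (auto simp: Theta0_def)
  have vg: "Vs g = Vs g0" using reach_inv[OF g0(3) wg] by simp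
  have vh: "Vs h = Vs h0" using reach_inv[OF h0(3) wh] by simp
  have r1: "rbn_reach TS (ext g0 (Vs h0) U) (ext g (Vs h0) U)"
    using reach_lift[OF g0(3) wg] disj by blast
  have r2: "rbn_reach TS (ext h0 (Vs g0) U) (ext h (Vs g0) U)"
    using reach_lift[OF h0(3) wh] disj by blast
  have eq: "ext g (Vs h0) U = ext h0 (Vs g0) U"
    using g0(4) h0(2) vg disj U unfolding ext_def
    by (intro sgraph.equality) (auto simp: fun_eq_iff)
  have r: "rbn_reach TS (ext g0 (Vs h0) U) (ext h (Vs g0) U)"
    using r1 r2 eq unfolding rbn_reach_def by simp
  have th: "ext g0 (Vs h0) U \<in> Theta0 TS"
    using g0(1,2) h0(1) disj U unfolding Theta0_def sgraph_wf_def ext_def valid_edges_def by auto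
  show ?thesis using r th g0 h0 disj vh vg U by (auto simp: ext_def)
qed

lemma solo_step:
  assumes "Es g = {}" "v \<in> Vs g" "R_rel TS (Lab g v) (Bcast a) x"
  shows "rbn_step TS g (g\<lparr>Lab := (Lab g)(v := x)\<rparr>)"
proof -
  have "bcast_step TS a g (g\<lparr>Lab := (Lab g)(v := x)\<rparr>)"
    unfolding bcast_step_def using assms by (auto simp: neighbour_def intro!: bexI[of _ v])
  then show ?thesis unfolding rbn_step_def by blast
qed

lemma pair_reach:
  assumes "sgraph_wf g" "Es g = {}" "u \<noteq> v" "u \<in> Vs g" "v \<in> Vs g"
    "R_rel TS (Lab g u) (Bcast a) x" "R_rel TS (Lab g v) (Recv a) y"
  shows "rbn_reach TS g (g\<lparr>Lab := (Lab g)(u := x, v := y)\<rparr>)"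
proof -
  define g1 where "g1 = g\<lparr>Es := {{u,v}}\<rparr>"
  define g2 where "g2 = g1\<lparr>Lab := (Lab g)(u := x, v := y)\<rparr>"
  have s1: "rbn_step TS g g1" unfolding rbn_step_def reconf_step_def g1_def valid_edges_def
    using assms by auto
  have nb: "neighbour g1 u w \<longleftrightarrow> w = v" for w
    unfolding neighbour_def g1_def using assms(3) by (auto simp: doubleton_eq_iff)
  have "bcast_step TS a g1 g2" unfolding bcast_step_def
  proof (intro conjI bexI[of _ u] allI impI)
    fix w assume "neighbour g1 u w" then show "R_rel TS (Lab g1 w) (Recv a) (Lab g2 w)"
      using nb assms by (simp add: g1_def g2_def)
  qed (use assms nb in \<open>auto simp: g1_def g2_def\<close>)
  then have s2: "rbn_step TS g1 g2" unfolding rbn_step_def by blast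
  have s3: "rbn_step TS g2 (g\<lparr>Lab := (Lab g)(u := x, v := y)\<rparr>)"
    unfolding rbn_step_def reconf_step_def g1_def g2_def valid_edges_def
    using assms by (auto simp: sgraph_wf_def valid_edges_def)
  show ?thesis unfolding rbn_reach_def using s1 s2 s3
    by (meson rtranclp.rtrancl_into_rtrancl rtranclp.rtrancl_refl)
qed

lemma Pseq_sub: "Pseq TS i \<subseteq> p_Rules TS"
  unfolding Pseq_def
  by (induction i) (auto simp: Let_def Rset_def)

lemma Pseq_recv:
  assumes "is_process TS" "t \<in> Pseq TS i" "p_lab TS t = Recv a"
  shows "\<exists>j<i. \<exists>t'\<in>Bset TS a. \<exists>c\<in>cmin TS t'. coverable TS (Pseq TS j) c"
  using assms(2,3)
proof (induction i)
  case 0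
  then have "t \<in> p_Rules TS" "t \<notin> Rec TS" by (auto simp: Pseq_def)
  moreover then have "p_lab TS t \<in> Bcast ` p_Sig TS \<union> Recv ` p_Sig TS"
    using assms(1) by (auto simp: is_process_def)
  ultimately show ?case using 0 by (auto simp: Rec_def Rset_def)
next
  case (Suc i)
  show ?case
  proof (cases "t \<in> Pseq TS i")
    case True
    then show ?thesis using Suc by (meson less_Suc_eq)
  next
    case False
    then obtain b where b: "b \<in> new_letters TS (Pseq TS i) (snd (pseq TS i))" "t \<in> Rset TS b"
      using Suc(2) by (auto simp: Pseq_def Let_def)
    then have "b = a" using Suc(3) by (auto simp: Rset_def)
    then show ?thesis using b(1) by (auto simp: new_letters_def)
  qed
qed

lemma bcast_enabled:
  assumes "is_process TS" "t' \<in> Bset TS a" "c \<in> cmin TS t'" "p_le TS c s"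
  shows "\<exists>x. R_rel TS s (Bcast a) x"
proof -
  obtain c2 where c2: "p_step TS t' c c2" using assms(3) by (auto simp: cmin_def enabled_def)
  have t': "t' \<in> p_Rules TS" "p_lab TS t' = Bcast a" using assms(2) by (auto simp: Bset_def)
  have "compatible TS {t'}" using assms(1) t' by (auto simp: is_process_def)
  then obtain x where "lts TS {t'} s (Bcast a) x"
    using c2 t' assms(4) unfolding compatible_def lts_def by blast
  then show ?thesis using t' unfolding lts_def by auto
qed

lemma main_S:
  assumes proc: "is_process TS"
  shows "\<forall>s0 s v X. s0 \<in> p_init TS \<longrightarrow> ts_reach TS (Pseq TS i) s0 s \<longrightarrow> finite X \<longrightarrow> v \<notin> X \<longrightarrow>
    (\<exists>g0 g. g0 \<in> Theta0 TS \<and> Es g0 = {} \<and> rbn_reach TS g0 g \<and> Es g = {} \<and> v \<in> Vs g0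
       \<and> Vs g0 \<inter> X = {} \<and> Lab g v = s)"
proof (induction i rule: less_induct)
  case (less i)
  show ?case
  proof (intro allI impI)
    fix s0 s v X
    assume s0: "s0 \<in> p_init TS" and r: "ts_reach TS (Pseq TS i) s0 s"
    show "finite X \<Longrightarrow> v \<notin> X \<Longrightarrow> (\<exists>g0 g. g0 \<in> Theta0 TS \<and> Es g0 = {} \<and> rbn_reach TS g0 g \<and> Es g = {} \<and> v \<in> Vs g0
       \<and> Vs g0 \<inter> X = {} \<and> Lab g v = s)"
      using r unfolding ts_reach_def
    proof (induction arbitrary: X rule: rtranclp_induct)
      case base
      define g0 :: "'a sgraph" where "g0 = \<lparr>Vs = {v}, Es = {}, Lab = (\<lambda>_. s0)\<rparr>"
      have "g0 \<in> Theta0 TS" using s0 by (auto simp: g0_def Theta0_def sgraph_wf_def valid_edges_def)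
      then show ?case using base by (auto simp: g0_def rbn_reach_def intro!: exI[of _ g0])
    next
      case (step s s')
      obtain g0 g where G: "g0 \<in> Theta0 TS" "Es g0 = {}" "rbn_reach TS g0 g" "Es g = {}" "v \<in> Vs g0"
        "Vs g0 \<inter> X = {}" "Lab g v = s" using step by blast
      have wg: "sgraph_wf g0" using G by (auto simp: Theta0_def)
      have vg: "Vs g = Vs g0" "sgraph_wf g" using reach_inv[OF G(3) wg] by auto
      obtain t where t: "t \<in> Pseq TS i" "p_step TS t s s'" using step(2) by (auto simp: ts_step_def)
      have tR: "t \<in> p_Rules TS" using t(1) Pseq_sub[of TS i] by blast
      show ?case
      proof (cases "p_lab TS t")
        case (Bcast a)
        have "R_rel TS (Lab g v) (Bcast a) s'" using t tR Bcast G(7) by (auto simp: lts_def)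
        then have "rbn_step TS g (g\<lparr>Lab := (Lab g)(v := s')\<rparr>)"
          using solo_step[OF G(4)] G(5) vg by auto
        then have "rbn_reach TS g0 (g\<lparr>Lab := (Lab g)(v := s')\<rparr>)"
          using G(3) unfolding rbn_reach_def by simp
        then show ?thesis using G by (intro exI[of _ g0] exI[of _ "g\<lparr>Lab := (Lab g)(v := s')\<rparr>"]) auto
      next
        case (Recv a)
        obtain j t' c where j: "j < i" "t' \<in> Bset TS a" "c \<in> cmin TS t'" "coverable TS (Pseq TS j) c"
          using Pseq_recv[OF proc t(1) Recv] by blast
        obtain s0' s'' where c: "s0' \<in> p_init TS" "ts_reach TS (Pseq TS j) s0' s''" "p_le TS c s''"
          using j(4) by (auto simp: coverable_def)
        define Y where "Y = X \<union> Vs g0"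
        have fY: "finite Y" using step wg by (auto simp: Y_def sgraph_wf_def)
        obtain u where u: "u \<notin> Y" using fY ex_new_if_finite infinite_UNIV_nat by blast
        obtain h0 h where H: "h0 \<in> Theta0 TS" "Es h0 = {}" "rbn_reach TS h0 h" "Es h = {}" "u \<in> Vs h0"
          "Vs h0 \<inter> Y = {}" "Lab h u = s''" using less(1)[OF j(1)] c fY u by blast
        define U where "U = (\<lambda>x. if x \<in> Vs g0 then Lab g x else Lab h0 x)"
        have disj: "Vs g0 \<inter> Vs h0 = {}" using H(6) by (auto simp: Y_def)
        note UN = union_reach[OF G(1-4) H(1-4) disj U_def]
        define k where "k = ext h (Vs g0) U"
        have wk: "sgraph_wf k" using reach_inv[of TS "ext g0 (Vs h0) U" k] UN
          by (auto simp: k_def Theta0_def)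
        have vk: "Vs k = Vs g0 \<union> Vs h0" using reach_inv[of TS "ext g0 (Vs h0) U" k] UN
          by (auto simp: k_def Theta0_def)
        have uv: "u \<noteq> v" using u G(5) by (auto simp: Y_def)
        obtain x where x: "R_rel TS s'' (Bcast a) x" using bcast_enabled[OF proc j(2,3) c(3)] by blast
        have y: "R_rel TS s (Recv a) s'" using t tR Recv by (auto simp: lts_def)
        have "rbn_reach TS k (k\<lparr>Lab := (Lab k)(u := x, v := s')\<rparr>)"
          apply (rule pair_reach[OF wk])
          using UN G H uv x y vk by (auto simp: k_def)
        then have "rbn_reach TS (ext g0 (Vs h0) U) (k\<lparr>Lab := (Lab k)(u := x, v := s')\<rparr>)"
          using UN unfolding rbn_reach_def k_def by auto
        then show ?thesis using UN G H vk uv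
          by (intro exI[of _ "ext g0 (Vs h0) U"] exI[of _ "k\<lparr>Lab := (Lab k)(u := x, v := s')\<rparr>"])
             (auto simp: Y_def k_def)
      qed
    qed
  qed
qed

theorem lemma10:
  fixes TS :: "('s, 'a, 'r) process" and i :: nat and s0 s :: 's
  assumes "is_process TS"
    and "i \<le> final_index TS"
    and "s0 \<in> p_init TS"
    and "ts_reach TS (Pseq TS i) s0 s"
  shows "\<exists>\<theta>0 \<theta> v. \<theta>0 \<in> Theta0 TS \<and> rbn_reach TS \<theta>0 \<theta> \<and> v \<in> Vs \<theta> \<and> Lab \<theta> v = s"
proof -
  obtain g0 g where G: "g0 \<in> Theta0 TS" "rbn_reach TS g0 g" "(0::nat) \<in> Vs g0" "Lab g 0 = s"
  proof -
    have "\<exists>g0 g. g0 \<in> Theta0 TS \<and> Es g0 = {} \<and> rbn_reach TS g0 g \<and> Es g = {} \<and> (0::nat) \<in> Vs g0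
       \<and> Vs g0 \<inter> {} = {} \<and> Lab g 0 = s"
      using main_S[OF assms(1), of i] assms(3,4) by blast
    then show ?thesis using that by blast
  qed
  have "Vs g = Vs g0" using reach_inv[OF G(2)] G(1) by (auto simp: Theta0_def)
  then show ?thesis using G by auto
qed

end
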